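(* Let $L$ be a code loop with basis $\mathcal{B}=\{a_1,\dots,a_n\}$. If $\Psi\in R_\mathcal{B}$, then $\hat\Psi$ is a half-automorphism of $L$ belonging to $H_\mathcal{B}(L)$. Conversely, for every $\varphi\in H_\mathcal{B}(L)$ there exists $\Psi\in R_\mathcal{B}$ with $\varphi=\hat\Psi$.
   Context: A code loop is a finite Moufang loop (loop satisfying $(x\cdot zx)y=x(z\cdot xy)$) with a unique nontrivial square, denoted $-1$; squares, commutators $[x,y]$ (defined by $xy=(yx)[x,y]$) and associators lie in $\{1,-1\}\subseteq Z(L)$, and $-x$ denotes $(-1)x$. A half-automorphism of $L$ is a bijection $f:L\to L$ with $f(xy)\in\{f(x)f(y),f(y)f(x)\}$ for all $x,y\in L$. Let $I_n=\{1,\dots,n\}$ and $P_n$ the set of subsets of $I_n$. Put $a_\emptyset=1$ and for $\sigma=\{i_1<\dots<i_k\}$ put $a_\sigma=(\cdots((a_{i_1}a_{i_2})a_{i_3})\cdots)a_{i_k}$; then every element of $L$ is $\pm a_\sigma$ for some $\sigma\in P_n$, and $a_\sigma a_\mu=\pm a_{\sigma\Delta\mu}$ ($\Delta$ = symmetric difference). Write $\{\sigma,\mu\}=[a_\sigma,a_\mu]$. $H_\mathcal{B}(L)$ is the set of half-automorphisms $\varphi$ of $L$ with $\varphi(a_i)=a_i$ for all $i$. $R_\mathcal{B}$ is the set of maps $\Psi:P_n\to\{1,-1\}$ with $\Psi(\emptyset)=1$, $\Psi(\{j\})=1$ for all $j\in I_n$, and $\Psi(\sigma\Delta\mu)=\Psi(\sigma)\Psi(\mu)$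 whenever $\{\sigma,\mu\}=1$. For $\Psi\in R_\mathcal{B}$, $\hat\Psi:L\to L$ is defined by $\hat\Psi(a_\sigma)=\Psi(\sigma)a_\sigma$ and $\hat\Psi(-a_\sigma)=-\Psi(\sigma)a_\sigma$. *)

theory Defs
  imports Main
begin

definition is_loop :: "'a set \<Rightarrow> ('a \<Rightarrow> 'a \<Rightarrow> 'a) \<Rightarrow> 'a \<Rightarrow> bool" where
  "is_loop L mult e \<longleftrightarrow>
     e \<in> L \<and> (\<forall>x\<in>L. \<forall>y\<in>L. mult x y \<in> L) \<and>
     (\<forall>x\<in>L. mult e x = x \<and> mult x e = x) \<and>
     (\<forall>x\<in>L. \<forall>y\<in>L. \<exists>!z. z \<in> L \<and> mult x z = y) \<and>
     (\<forall>x\<in>L. \<forall>y\<in>L. \<exists>!z. z \<in> L \<and> mult z x = y)"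

definition moufang :: "'a set \<Rightarrow> ('a \<Rightarrow> 'a \<Rightarrow> 'a) \<Rightarrow> bool" where
  "moufang L mult \<longleftrightarrow>
     (\<forall>x\<in>L. \<forall>y\<in>L. \<forall>z\<in>L. mult (mult x (mult z x)) y = mult x (mult z (mult x y)))"

definition minus1 :: "'a set \<Rightarrow> ('a \<Rightarrow> 'a \<Rightarrow> 'a) \<Rightarrow> 'a \<Rightarrow> 'a" where
  "minus1 L mult e = (THE s. s \<noteq> e \<and> (\<exists>x\<in>L. mult x x = s))"

text \<open>Code loop: finite Moufang loop with a unique nontrivial square -1; moreover (as recorded
  in the paper's standing facts) squares, commutators and associators lie in the central
  subgroup {1,-1}.\<close>
definition code_loop :: "'a set \<Rightarrow> ('a \<Rightarrow> 'a \<Rightarrow> 'a) \<Rightarrow> 'a \<Rightarrow> bool" where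
  "code_loop L mult e \<longleftrightarrow>
     finite L \<and> is_loop L mult e \<and> moufang L mult \<and>
     (\<exists>!s. s \<noteq> e \<and> (\<exists>x\<in>L. mult x x = s)) \<and>
     (let m = minus1 L mult e in
        (\<forall>x\<in>L. mult x x = e \<or> mult x x = m) \<and>
        (\<forall>x\<in>L. \<forall>y\<in>L. mult m x = mult x m \<and>
                 mult (mult m x) y = mult m (mult x y) \<and>
                 mult (mult x m) y = mult x (mult m y) \<and>
                 mult (mult x y) m = mult x (mult y m)) \<and>
        (\<forall>x\<in>L. \<forall>y\<in>L. mult x y = mult (mult y x) e \<or> mult x y = mult (mult y x) m) \<and>
        (\<forall>x\<in>L. \<forall>y\<in>L. \<forall>z\<in>L. mult (mult x y) z = mult (mult x (mult y z)) e \<or>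
                                mult (mult x y) z = mult (mult x (mult y z)) m))"

definition lneg :: "'a set \<Rightarrow> ('a \<Rightarrow> 'a \<Rightarrow> 'a) \<Rightarrow> 'a \<Rightarrow> 'a \<Rightarrow> 'a" where
  "lneg L mult e x = mult (minus1 L mult e) x"

definition a_sub :: "('a \<Rightarrow> 'a \<Rightarrow> 'a) \<Rightarrow> 'a \<Rightarrow> (nat \<Rightarrow> 'a) \<Rightarrow> nat set \<Rightarrow> 'a" where
  "a_sub mult e a \<sigma> = foldl (\<lambda>acc i. mult acc (a i)) e (sorted_list_of_set \<sigma>)"

text \<open>Basis a_1..a_n: the a_i lie in L and every element of L is uniquely of the form
  a_sigma or -a_sigma with sigma a subset of {1..n}.\<close>
definition code_basis :: "'a set \<Rightarrow> ('a \<Rightarrow> 'a \<Rightarrow> 'a) \<Rightarrow> 'a \<Rightarrow> (nat \<Rightarrow> 'a) \<Rightarrow> nat \<Rightarrow> bool" where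
  "code_basis L mult e a n \<longleftrightarrow>
     (\<forall>i\<in>{1..n}. a i \<in> L) \<and>
     bij_betw (\<lambda>(b::bool, \<sigma>). if b then a_sub mult e a \<sigma> else lneg L mult e (a_sub mult e a \<sigma>))
        (UNIV \<times> Pow {1..n}) L"

definition half_automorphism :: "'a set \<Rightarrow> ('a \<Rightarrow> 'a \<Rightarrow> 'a) \<Rightarrow> ('a \<Rightarrow> 'a) \<Rightarrow> bool" where
  "half_automorphism L mult f \<longleftrightarrow>
     bij_betw f L L \<and>
     (\<forall>x\<in>L. \<forall>y\<in>L. f (mult x y) = mult (f x) (f y) \<or> f (mult x y) = mult (f y) (f x))"

definition H_B :: "'a set \<Rightarrow> ('a \<Rightarrow> 'a \<Rightarrow> 'a) \<Rightarrow> (nat \<Rightarrow> 'a) \<Rightarrow> nat \<Rightarrow> ('a \<Rightarrow> 'a) set" where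
  "H_B L mult a n = {f. half_automorphism L mult f \<and> (\<forall>i\<in>{1..n}. f (a i) = a i)}"

definition symdiff :: "nat set \<Rightarrow> nat set \<Rightarrow> nat set" where
  "symdiff \<sigma> \<mu> = (\<sigma> - \<mu>) \<union> (\<mu> - \<sigma>)"

text \<open>R_B: maps Psi : P_n \<rightarrow> {1,-1} (values outside P_n are irrelevant) with Psi({})=1,
  Psi({j})=1 and Psi(sigma Delta mu) = Psi(sigma) Psi(mu) whenever [a_sigma,a_mu]=1.\<close>
definition R_B :: "'a set \<Rightarrow> ('a \<Rightarrow> 'a \<Rightarrow> 'a) \<Rightarrow> 'a \<Rightarrow> (nat \<Rightarrow> 'a) \<Rightarrow> nat \<Rightarrow> (nat set \<Rightarrow> int) set" where
  "R_B L mult e a n = {\<Psi>.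
     (\<forall>\<sigma>\<in>Pow {1..n}. \<Psi> \<sigma> \<in> {1, -1}) \<and> \<Psi> {} = 1 \<and> (\<forall>j\<in>{1..n}. \<Psi> {j} = 1) \<and>
     (\<forall>\<sigma>\<in>Pow {1..n}. \<forall>\<mu>\<in>Pow {1..n}.
        mult (a_sub mult e a \<sigma>) (a_sub mult e a \<mu>) = mult (a_sub mult e a \<mu>) (a_sub mult e a \<sigma>)
        \<longrightarrow> \<Psi> (symdiff \<sigma> \<mu>) = \<Psi> \<sigma> * \<Psi> \<mu>)}"

definition sgn_mult :: "'a set \<Rightarrow> ('a \<Rightarrow> 'a \<Rightarrow> 'a) \<Rightarrow> 'a \<Rightarrow> int \<Rightarrow> 'a \<Rightarrow> 'a" where
  "sgn_mult L mult e k x = (if k = 1 then x else lneg L mult e x)"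

definition Psi_hat :: "'a set \<Rightarrow> ('a \<Rightarrow> 'a \<Rightarrow> 'a) \<Rightarrow> 'a \<Rightarrow> (nat \<Rightarrow> 'a) \<Rightarrow> nat \<Rightarrow> (nat set \<Rightarrow> int) \<Rightarrow> 'a \<Rightarrow> 'a" where
  "Psi_hat L mult e a n \<Psi> x =
     (let \<sigma> = (THE \<sigma>. \<sigma> \<subseteq> {1..n} \<and> (x = a_sub mult e a \<sigma> \<or> x = lneg L mult e (a_sub mult e a \<sigma>)))
      in if x = a_sub mult e a \<sigma> then sgn_mult L mult e (\<Psi> \<sigma>) (a_sub mult e a \<sigma>)
         else lneg L mult e (sgn_mult L mult e (\<Psi> \<sigma>) (a_sub mult e a \<sigma>)))"

end

theory Submission imports Defs begin

locale cl =
  fixes L :: "'a set" and mult :: "'a \<Rightarrow> 'a \<Rightarrow> 'a" and e :: 'a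
    and a :: "nat \<Rightarrow> 'a" and n :: nat
  assumes CL: "code_loop L mult e"
    and CB: "code_basis L mult e a n"
begin

abbreviation m where "m \<equiv> minus1 L mult e"

lemma loop: "is_loop L mult e" using CL unfolding code_loop_def by auto
lemma e_in: "e \<in> L" using loop unfolding is_loop_def by auto
lemma closed[simp,intro]: "x \<in> L \<Longrightarrow> y \<in> L \<Longrightarrow> mult x y \<in> L"
  using loop unfolding is_loop_def by auto
lemma unit[simp]: "x \<in> L \<Longrightarrow> mult e x = x" "x \<in> L \<Longrightarrow> mult x e = x"
  using loop unfolding is_loop_def by auto
lemma lcancel: assumes "x \<in> L" "z1 \<in> L" "z2 \<in> L" "mult x z1 = mult x z2" shows "z1 = z2"
proof -
  have "\<exists>!z. z \<in> L \<and> mult x z = mult x z1" using loop assms unfolding is_loop_def by auto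
  thus ?thesis using assms by auto
qed
lemma rcancel: assumes "x \<in> L" "z1 \<in> L" "z2 \<in> L" "mult z1 x = mult z2 x" shows "z1 = z2"
proof -
  have "\<exists>!z. z \<in> L \<and> mult z x = mult z1 x" using loop assms unfolding is_loop_def by auto
  thus ?thesis using assms by auto
qed

lemma m_props: "m \<noteq> e \<and> (\<exists>x\<in>L. mult x x = m)"
proof -
  have "\<exists>!s. s \<noteq> e \<and> (\<exists>x\<in>L. mult x x = s)" using CL unfolding code_loop_def by auto
  from theI'[OF this] show ?thesis unfolding minus1_def .
qed
lemma m_in[simp,intro]: "m \<in> L" using m_props closed by metis
lemma m_ne: "m \<noteq> e" using m_props by auto

lemma ax: "(\<forall>x\<in>L. mult x x = e \<or> mult x x = m) \<and>
        (\<forall>x\<in>L. \<forall>y\<in>L. mult m x = mult x m \<and>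
                 mult (mult m x) y = mult m (mult x y) \<and>
                 mult (mult x m) y = mult x (mult m y) \<and>
                 mult (mult x y) m = mult x (mult y m)) \<and>
        (\<forall>x\<in>L. \<forall>y\<in>L. mult x y = mult (mult y x) e \<or> mult x y = mult (mult y x) m) \<and>
        (\<forall>x\<in>L. \<forall>y\<in>L. \<forall>z\<in>L. mult (mult x y) z = mult (mult x (mult y z)) e \<or>
                                mult (mult x y) z = mult (mult x (mult y z)) m)"
  using CL unfolding code_loop_def Let_def by blast

lemma sq: "x \<in> L \<Longrightarrow> mult x x = e \<or> mult x x = m" using ax by blast
lemma mcomm: "x \<in> L \<Longrightarrow> mult m x = mult x m" using ax by blast
lemma massoc1: "x \<in> L \<Longrightarrow> y \<in> L \<Longrightarrow> mult (mult m x) y = mult m (mult x y)" using ax by blast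
lemma massoc2: "x \<in> L \<Longrightarrow> y \<in> L \<Longrightarrow> mult (mult x m) y = mult x (mult m y)" using ax by blast
lemma comm: "x \<in> L \<Longrightarrow> y \<in> L \<Longrightarrow> mult x y = mult (mult y x) e \<or> mult x y = mult (mult y x) m" using ax by blast
lemma assoc: "x \<in> L \<Longrightarrow> y \<in> L \<Longrightarrow> z \<in> L \<Longrightarrow> mult (mult x y) z = mult (mult x (mult y z)) e \<or>
                                mult (mult x y) z = mult (mult x (mult y z)) m" using ax by blast

lemma mm: "mult m m = e"
proof -
  have "mult m m = e \<or> mult m m = m" using sq by auto
  moreover have "mult m m \<noteq> m"
  proof
    assume "mult m m = m" hence "mult m m = mult e m" by simp
    hence "m = e" using rcancel e_in by blast
    thus False using m_ne by simp
  qed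
  ultimately show ?thesis by auto
qed

definition sg :: "bool \<Rightarrow> 'a \<Rightarrow> 'a" where "sg b x = (if b then x else mult m x)"

lemma sg_in[simp,intro]: "x \<in> L \<Longrightarrow> sg b x \<in> L" unfolding sg_def by auto
lemma mmx: "x \<in> L \<Longrightarrow> mult m (mult m x) = x"
  using massoc1[of m x] mm by simp
lemma sg_sg[simp]: "x \<in> L \<Longrightarrow> sg b (sg c x) = sg (b = c) x"
  unfolding sg_def using mmx by auto
lemma sg_T[simp]: "sg True x = x" unfolding sg_def by simp
lemma sg_multl: "x \<in> L \<Longrightarrow> y \<in> L \<Longrightarrow> mult (sg b x) y = sg b (mult x y)"
  unfolding sg_def using massoc1 by auto
lemma sg_multr: "x \<in> L \<Longrightarrow> y \<in> L \<Longrightarrow> mult x (sg b y) = sg b (mult x y)"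
  unfolding sg_def using massoc2 massoc1 mcomm by auto
lemma mx_ne: "x \<in> L \<Longrightarrow> mult m x \<noteq> x"
proof
  assume "x \<in> L" "mult m x = x"
  hence "mult m x = mult e x" by simp
  thus False using rcancel \<open>x \<in> L\<close> e_in m_ne by blast
qed
lemma sg_inj_b: "x \<in> L \<Longrightarrow> sg b x = sg c x \<longleftrightarrow> b = c"
  using mx_ne[of x] unfolding sg_def by (cases b; cases c) auto
lemma sg_inj_x: "x \<in> L \<Longrightarrow> y \<in> L \<Longrightarrow> sg b x = sg b y \<longleftrightarrow> x = y"
  unfolding sg_def using lcancel[of m x y] by auto

definition eqv (infix "\<approx>" 50) where "x \<approx> y \<longleftrightarrow> x \<in> L \<and> y \<in> L \<and> (\<exists>b. x = sg b y)"

lemma eqv_refl: "x \<in> L \<Longrightarrow> x \<approx> x" unfolding eqv_def using sg_T by metis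
lemma eqv_sym: "x \<approx> y \<Longrightarrow> y \<approx> x"
proof -
  assume "x \<approx> y"
  then obtain b where h: "x \<in> L" "y \<in> L" "x = sg b y" unfolding eqv_def by blast
  hence "sg b x = y" by simp
  thus ?thesis using h unfolding eqv_def by blast
qed
lemma eqv_trans[trans]: "x \<approx> y \<Longrightarrow> y \<approx> z \<Longrightarrow> x \<approx> z"
proof -
  assume "x \<approx> y" "y \<approx> z"
  then obtain b c where h: "x \<in> L" "y \<in> L" "z \<in> L" "x = sg b y" "y = sg c z" unfolding eqv_def by blast
  hence "x = sg (b = c) z" by simp
  thus ?thesis using h unfolding eqv_def by blast
qed
lemma eqv_cong: "x \<approx> x' \<Longrightarrow> y \<approx> y' \<Longrightarrow> mult x y \<approx> mult x' y'"
proof -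
  assume "x \<approx> x'" "y \<approx> y'"
  then obtain b c where h: "x \<in> L" "y \<in> L" "x' \<in> L" "y' \<in> L" "x = sg b x'" "y = sg c y'" unfolding eqv_def by blast
  hence "mult x y = sg (b = c) (mult x' y')" by (cases b; cases c) (simp_all add: sg_multl sg_multr)
  thus ?thesis using h unfolding eqv_def by blast
qed
lemma eqv_congl: "x \<approx> x' \<Longrightarrow> y \<in> L \<Longrightarrow> mult x y \<approx> mult x' y"
  using eqv_cong eqv_refl by blast
lemma eqv_congr: "y \<approx> y' \<Longrightarrow> x \<in> L \<Longrightarrow> mult x y \<approx> mult x y'"
  using eqv_cong eqv_refl by blast
lemma eqv_comm: "x \<in> L \<Longrightarrow> y \<in> L \<Longrightarrow> mult x y \<approx> mult y x"
proof -
  assume h: "x \<in> L" "y \<in> L"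
  have "mult x y = sg True (mult y x) \<or> mult x y = sg False (mult y x)"
    using comm[OF h] mcomm[of "mult y x"] h unfolding sg_def by auto
  thus ?thesis unfolding eqv_def using h by blast
qed
lemma eqv_assoc: "x \<in> L \<Longrightarrow> y \<in> L \<Longrightarrow> z \<in> L \<Longrightarrow> mult (mult x y) z \<approx> mult x (mult y z)"
proof -
  assume h: "x \<in> L" "y \<in> L" "z \<in> L"
  have "mult (mult x y) z = sg True (mult x (mult y z)) \<or> mult (mult x y) z = sg False (mult x (mult y z))"
    using assoc[OF h] mcomm[of "mult x (mult y z)"] h unfolding sg_def by auto
  thus ?thesis unfolding eqv_def using h by blast
qed
lemma eqv_sq: "x \<in> L \<Longrightarrow> mult x x \<approx> e"
proof -
  assume h: "x \<in> L"
  have "mult x x = sg True e \<or> mult x x = sg False e" using sq[OF h] e_in unfolding sg_def by auto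
  thus ?thesis unfolding eqv_def using h e_in by blast
qed


lemma a_in: "i \<in> {1..n} \<Longrightarrow> a i \<in> L" using CB unfolding code_basis_def by auto

definition pr where "pr x l = foldl (\<lambda>acc i. mult acc (a i)) x l"

lemma pr_simps[simp]: "pr x [] = x" "pr x (j # l) = pr (mult x (a j)) l"
  unfolding pr_def by auto

lemma pr_in: "x \<in> L \<Longrightarrow> set l \<subseteq> {1..n} \<Longrightarrow> pr x l \<in> L"
  by (induction l arbitrary: x) (auto simp: a_in)

lemma pr_split: "x \<in> L \<Longrightarrow> set l \<subseteq> {1..n} \<Longrightarrow> pr x l \<approx> mult x (pr e l)"
proof (induction l arbitrary: x)
  case Nil thus ?case by (simp add: eqv_refl)
next
  case (Cons j l)
  have aj: "a j \<in> L" using Cons a_in by auto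
  have pl: "pr e l \<in> L" using Cons e_in pr_in by auto
  have "pr x (j # l) \<approx> mult (mult x (a j)) (pr e l)" using Cons.IH[of "mult x (a j)"] Cons.prems aj by simp
  also have "\<dots> \<approx> mult x (mult (a j) (pr e l))" using eqv_assoc[OF Cons.prems(1) aj pl] .
  also have "\<dots> \<approx> mult x (pr e (j # l))"
  proof -
    have "pr (a j) l \<approx> mult (a j) (pr e l)" using Cons.IH[of "a j"] aj Cons.prems by simp
    hence "mult x (pr (a j) l) \<approx> mult x (mult (a j) (pr e l))"
      using eqv_cong eqv_refl Cons.prems(1) by blast
    moreover have "pr e (j # l) = pr (a j) l" using aj by simp
    ultimately show ?thesis by (metis eqv_sym)
  qed
  finally show ?case .
qed


lemma pr_cons: "i \<in> {1..n} \<Longrightarrow> set l \<subseteq> {1..n} \<Longrightarrow> pr e (i # l) \<approx> mult (a i) (pr e l)"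
proof -
  assume h: "i \<in> {1..n}" "set l \<subseteq> {1..n}"
  have "a i \<in> L" using a_in h by auto
  thus ?thesis using pr_split[of "a i" l] h by simp
qed

lemma pr_insort: "i \<in> {1..n} \<Longrightarrow> set l \<subseteq> {1..n} \<Longrightarrow> pr e (insort i l) \<approx> mult (a i) (pr e l)"
proof (induction l)
  case Nil
  have "a i \<in> L" using a_in Nil by auto
  thus ?case using eqv_refl[of "a i"] by simp
next
  case (Cons x l)
  have ai: "a i \<in> L" and ax: "a x \<in> L" and pl: "pr e l \<in> L" and xs: "x \<in> {1..n}" and ls: "set l \<subseteq> {1..n}"
    using Cons.prems a_in pr_in e_in by auto
  show ?case
  proof (cases "i \<le> x")
    case True
    hence "insort i (x # l) = i # x # l" by simp
    thus ?thesis using pr_cons[of i "x # l"] Cons.prems by simp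
  next
    case False
    have "pr e (insort i (x # l)) = pr e (x # insort i l)" using False by simp
    also have "\<dots> \<approx> mult (a x) (pr e (insort i l))"
      using pr_cons[of x "insort i l"] xs ls Cons.prems(1) by (simp add: set_insort_key)
    also have "\<dots> \<approx> mult (a x) (mult (a i) (pr e l))"
      using eqv_congr[OF Cons.IH[OF Cons.prems(1) ls] ax] .
    also have "\<dots> \<approx> mult (mult (a x) (a i)) (pr e l)" using eqv_sym[OF eqv_assoc[OF ax ai pl]] .
    also have "\<dots> \<approx> mult (mult (a i) (a x)) (pr e l)" using eqv_congl[OF eqv_comm[OF ax ai] pl] .
    also have "\<dots> \<approx> mult (a i) (mult (a x) (pr e l))" using eqv_assoc[OF ai ax pl] .
    also have "\<dots> \<approx> mult (a i) (pr e (x # l))"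
      using eqv_congr[OF eqv_sym[OF pr_cons[OF xs ls]] ai] .
    finally show ?thesis .
  qed
qed

abbreviation A where "A \<sigma> \<equiv> a_sub mult e a \<sigma>"

lemma A_pr: "A \<sigma> = pr e (sorted_list_of_set \<sigma>)" unfolding a_sub_def pr_def by simp

lemma A_in: "\<sigma> \<subseteq> {1..n} \<Longrightarrow> A \<sigma> \<in> L"
  unfolding A_pr using pr_in e_in finite_subset[of \<sigma> "{1..n}"] by auto

lemma A_empty[simp]: "A {} = e" unfolding A_pr by simp
lemma A_single[simp]: "i \<in> {1..n} \<Longrightarrow> A {i} = a i" unfolding A_pr using a_in by simp

lemma A_insert: "\<sigma> \<subseteq> {1..n} \<Longrightarrow> i \<in> {1..n} \<Longrightarrow> i \<notin> \<sigma> \<Longrightarrow> A (insert i \<sigma>) \<approx> mult (a i) (A \<sigma>)"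
proof -
  assume h: "\<sigma> \<subseteq> {1..n}" "i \<in> {1..n}" "i \<notin> \<sigma>"
  have f: "finite \<sigma>" using h finite_subset by blast
  have "A (insert i \<sigma>) = pr e (insort i (sorted_list_of_set \<sigma>))"
    unfolding A_pr using sorted_list_of_set_insert[OF f h(3)] by simp
  moreover have "set (sorted_list_of_set \<sigma>) \<subseteq> {1..n}" using f h by simp
  ultimately show ?thesis using pr_insort[OF h(2)] unfolding A_pr by simp
qed

lemma A_mult_single: "\<sigma> \<subseteq> {1..n} \<Longrightarrow> i \<in> {1..n} \<Longrightarrow> mult (A \<sigma>) (a i) \<approx> A (symdiff \<sigma> {i})"
proof -
  assume s: "\<sigma> \<subseteq> {1..n}" and i: "i \<in> {1..n}"
  have ai: "a i \<in> L" using a_in i by auto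
  show ?thesis
  proof (cases "i \<in> \<sigma>")
    case True
    define \<tau> where "\<tau> = \<sigma> - {i}"
    have t: "\<tau> \<subseteq> {1..n}" "i \<notin> \<tau>" "\<sigma> = insert i \<tau>" using s True unfolding \<tau>_def by auto
    have At: "A \<tau> \<in> L" using A_in t by auto
    have sd: "symdiff \<sigma> {i} = \<tau>" unfolding symdiff_def \<tau>_def using True by auto
    have "mult (A \<sigma>) (a i) \<approx> mult (mult (a i) (A \<tau>)) (a i)"
      using eqv_congl[OF A_insert[OF t(1) i t(2)] ai] t(3) by simp
    also have "\<dots> \<approx> mult (mult (A \<tau>) (a i)) (a i)" using eqv_congl[OF eqv_comm[OF ai At] ai] .
    also have "\<dots> \<approx> mult (A \<tau>) (mult (a i) (a i))" using eqv_assoc[OF At ai ai] .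
    also have "\<dots> \<approx> mult (A \<tau>) e" using eqv_congr[OF eqv_sq[OF ai] At] .
    also have "mult (A \<tau>) e = A \<tau>" using At by simp
    finally show ?thesis using sd by simp
  next
    case False
    have sd: "symdiff \<sigma> {i} = insert i \<sigma>" unfolding symdiff_def using False by auto
    have As: "A \<sigma> \<in> L" using A_in s by auto
    have "mult (A \<sigma>) (a i) \<approx> mult (a i) (A \<sigma>)" using eqv_comm[OF As ai] .
    also have "\<dots> \<approx> A (insert i \<sigma>)" using eqv_sym[OF A_insert[OF s i False]] .
    finally show ?thesis using sd by simp
  qed
qed

lemma A_mult: "\<mu> \<subseteq> {1..n} \<Longrightarrow> \<sigma> \<subseteq> {1..n} \<Longrightarrow> mult (A \<sigma>) (A \<mu>) \<approx> A (symdiff \<sigma> \<mu>)"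
proof (induction \<mu> arbitrary: \<sigma> rule: infinite_finite_induct)
  case (infinite \<mu>) thus ?case using finite_subset by blast
next
  case empty
  have "symdiff \<sigma> {} = \<sigma>" unfolding symdiff_def by auto
  moreover have "A \<sigma> \<in> L" using A_in empty by blast
  ultimately show ?case using eqv_refl[of "A \<sigma>"] by simp
next
  case (insert j \<mu> \<sigma>)
  have j: "j \<in> {1..n}" and mu: "\<mu> \<subseteq> {1..n}" using insert by auto
  have aj: "a j \<in> L" using a_in j by auto
  have As: "A \<sigma> \<in> L" "A \<mu> \<in> L" using A_in insert mu by auto
  have sd: "symdiff \<sigma> {j} \<subseteq> {1..n}" using insert j unfolding symdiff_def by auto
  have "mult (A \<sigma>) (A (insert j \<mu>)) \<approx> mult (A \<sigma>) (mult (a j) (A \<mu>))"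
    using eqv_congr[OF A_insert[OF mu j insert(2)] As(1)] .
  also have "\<dots> \<approx> mult (mult (A \<sigma>) (a j)) (A \<mu>)" using eqv_sym[OF eqv_assoc[OF As(1) aj As(2)]] .
  also have "\<dots> \<approx> mult (A (symdiff \<sigma> {j})) (A \<mu>)"
    using eqv_congl[OF A_mult_single[OF insert(5) j] As(2)] .
  also have "\<dots> \<approx> A (symdiff (symdiff \<sigma> {j}) \<mu>)" using insert(3)[OF mu sd] .
  also have "symdiff (symdiff \<sigma> {j}) \<mu> = symdiff \<sigma> (insert j \<mu>)"
    using insert(2) unfolding symdiff_def by blast
  finally show ?case .
qed


lemma lneg_sg: "lneg L mult e x = sg False x" unfolding lneg_def sg_def by simp

lemma basis_bij: "bij_betw (\<lambda>(b, \<sigma>). sg b (A \<sigma>)) (UNIV \<times> Pow {1..n}) L"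
proof -
  have "(\<lambda>(b::bool, \<sigma>). if b then A \<sigma> else lneg L mult e (A \<sigma>)) = (\<lambda>(b, \<sigma>). sg b (A \<sigma>))"
    unfolding lneg_sg sg_def by (auto simp: fun_eq_iff)
  thus ?thesis using CB unfolding code_basis_def by simp
qed

lemma basis_surj: "x \<in> L \<Longrightarrow> \<exists>b \<sigma>. \<sigma> \<subseteq> {1..n} \<and> x = sg b (A \<sigma>)"
proof -
  assume x: "x \<in> L"
  have "(\<lambda>(b, \<sigma>). sg b (A \<sigma>)) ` (UNIV \<times> Pow {1..n}) = L"
    using basis_bij by (rule bij_betw_imp_surj_on)
  hence "x \<in> (\<lambda>(b, \<sigma>). sg b (A \<sigma>)) ` (UNIV \<times> Pow {1..n})" using x by simp
  then obtain p where p: "p \<in> UNIV \<times> Pow {1..n}" "x = (\<lambda>(b, \<sigma>). sg b (A \<sigma>)) p" by (rule imageE)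
  obtain b \<sigma> where "p = (b, \<sigma>)" by (cases p)
  thus ?thesis using p by auto
qed

lemma basis_inj: "\<sigma> \<subseteq> {1..n} \<Longrightarrow> \<tau> \<subseteq> {1..n} \<Longrightarrow> sg b (A \<sigma>) = sg c (A \<tau>) \<Longrightarrow> b = c \<and> \<sigma> = \<tau>"
proof -
  assume h: "\<sigma> \<subseteq> {1..n}" "\<tau> \<subseteq> {1..n}" "sg b (A \<sigma>) = sg c (A \<tau>)"
  have "inj_on (\<lambda>(b, \<sigma>). sg b (A \<sigma>)) (UNIV \<times> Pow {1..n})" using basis_bij unfolding bij_betw_def by blast
  hence "(b, \<sigma>) = (c, \<tau>)" using h unfolding inj_on_def by auto
  thus ?thesis by simp
qed

abbreviation hat where "hat \<Psi> \<equiv> Psi_hat L mult e a n \<Psi>"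

lemma hat_eval: assumes s: "\<sigma> \<subseteq> {1..n}" shows "hat \<Psi> (sg b (A \<sigma>)) = sg (b = (\<Psi> \<sigma> = 1)) (A \<sigma>)"
proof -
  have As: "A \<sigma> \<in> L" using A_in s by blast
  have ex: "\<And>\<tau>. (\<tau> \<subseteq> {1..n} \<and> (sg b (A \<sigma>) = A \<tau> \<or> sg b (A \<sigma>) = lneg L mult e (A \<tau>))) \<longleftrightarrow> \<tau> = \<sigma>"
  proof
    fix \<tau> assume "\<tau> \<subseteq> {1..n} \<and> (sg b (A \<sigma>) = A \<tau> \<or> sg b (A \<sigma>) = lneg L mult e (A \<tau>))"
    hence "\<tau> \<subseteq> {1..n}" "sg b (A \<sigma>) = sg True (A \<tau>) \<or> sg b (A \<sigma>) = sg False (A \<tau>)" unfolding lneg_sg by auto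
    thus "\<tau> = \<sigma>" using basis_inj[OF s, of \<tau> b True] basis_inj[OF s, of \<tau> b False] by blast
  next
    fix \<tau> assume "\<tau> = \<sigma>"
    thus "\<tau> \<subseteq> {1..n} \<and> (sg b (A \<sigma>) = A \<tau> \<or> sg b (A \<sigma>) = lneg L mult e (A \<tau>))"
      using s unfolding lneg_sg by (cases b) auto
  qed
  have the: "(THE \<tau>. \<tau> \<subseteq> {1..n} \<and> (sg b (A \<sigma>) = A \<tau> \<or> sg b (A \<sigma>) = lneg L mult e (A \<tau>))) = \<sigma>"
    unfolding ex by simp
  have sm: "\<And>k x. sgn_mult L mult e k x = sg (k = 1) x" unfolding sgn_mult_def lneg_sg sg_def by simp
  have ne: "sg False (A \<sigma>) \<noteq> A \<sigma>" using mx_ne[OF As] unfolding sg_def by simp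
  have gen: "hat \<Psi> (sg b (A \<sigma>)) = (if sg b (A \<sigma>) = A \<sigma> then sg (\<Psi> \<sigma> = 1) (A \<sigma>)
      else sg False (sg (\<Psi> \<sigma> = 1) (A \<sigma>)))"
    unfolding Psi_hat_def Let_def the unfolding sm lneg_sg by simp
  show ?thesis
  proof (cases b)
    case True thus ?thesis using gen by simp
  next
    case False
    thus ?thesis using gen ne As by simp
  qed
qed

lemma A_mult_sg: "\<sigma> \<subseteq> {1..n} \<Longrightarrow> \<mu> \<subseteq> {1..n} \<Longrightarrow> \<exists>d. mult (A \<sigma>) (A \<mu>) = sg d (A (symdiff \<sigma> \<mu>))"
  using A_mult unfolding eqv_def by blast

lemma symdiff_sub: "\<sigma> \<subseteq> {1..n} \<Longrightarrow> \<mu> \<subseteq> {1..n} \<Longrightarrow> symdiff \<sigma> \<mu> \<subseteq> {1..n}"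
  unfolding symdiff_def by auto

lemma noncomm: "x \<in> L \<Longrightarrow> y \<in> L \<Longrightarrow> mult x y \<noteq> mult y x \<Longrightarrow> mult y x = sg False (mult x y)"
proof -
  assume h: "x \<in> L" "y \<in> L" "mult x y \<noteq> mult y x"
  hence "mult x y = mult (mult y x) m" using comm[OF h(1,2)] by auto
  hence "mult x y = sg False (mult y x)" using mcomm[of "mult y x"] h unfolding sg_def by simp
  thus ?thesis using h by simp
qed

lemma bl0: "(c = (b = d)) = (b = (c = (d::bool)))" by (cases b; cases c; cases d) simp_all
lemma sg_disj: "X = Y1 \<or> X = Y2 \<Longrightarrow> sg X z = sg Y1 z \<or> sg X z = sg Y2 z" by auto
lemma bl1: "r = (p = q) \<Longrightarrow> ((b = (c = d)) = r) = ((b = p) = ((c = q) = d))"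
  by (cases b; cases c; cases d; cases p; cases q) simp_all
lemma bl2: "(((b = (c = d)) = r) = ((b = p) = ((c = q) = d))) \<or>
          (((b = (c = d)) = r) = ((b = p) = ((c = q) = (\<not> d))))"
  by (cases b; cases c; cases d; cases p; cases q; cases r) simp_all

lemma dir1: assumes P: "\<Psi> \<in> R_B L mult e a n" shows "hat \<Psi> \<in> H_B L mult a n"
proof -
  let ?h = "hat \<Psi>"
  have Pv: "\<And>\<sigma>. \<sigma> \<subseteq> {1..n} \<Longrightarrow> \<Psi> \<sigma> = 1 \<or> \<Psi> \<sigma> = -1" using P unfolding R_B_def by auto
  have Pm: "\<And>\<sigma> \<mu>. \<sigma> \<subseteq> {1..n} \<Longrightarrow> \<mu> \<subseteq> {1..n} \<Longrightarrow> mult (A \<sigma>) (A \<mu>) = mult (A \<mu>) (A \<sigma>) \<Longrightarrow>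
      \<Psi> (symdiff \<sigma> \<mu>) = \<Psi> \<sigma> * \<Psi> \<mu>" using P unfolding R_B_def by auto
  have P1: "\<And>j. j \<in> {1..n} \<Longrightarrow> \<Psi> {j} = 1" using P unfolding R_B_def by auto
  have hL: "\<And>x. x \<in> L \<Longrightarrow> ?h x \<in> L \<and> ?h (?h x) = x"
  proof -
    fix x assume "x \<in> L"
    then obtain b \<sigma> where s: "\<sigma> \<subseteq> {1..n}" "x = sg b (A \<sigma>)" using basis_surj by blast
    have "A \<sigma> \<in> L" using A_in s by blast
    moreover have h1: "?h x = sg (b = (\<Psi> \<sigma> = 1)) (A \<sigma>)" using s hat_eval[OF s(1)] by simp
    moreover have "?h (?h x) = sg ((b = (\<Psi> \<sigma> = 1)) = (\<Psi> \<sigma> = 1)) (A \<sigma>)"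
      unfolding h1 using hat_eval[OF s(1)] by blast
    ultimately show "?h x \<in> L \<and> ?h (?h x) = x" using s by (cases b; cases "\<Psi> \<sigma> = 1") auto
  qed
  have bij: "bij_betw ?h L L"
    by (rule bij_betw_byWitness[where f'="?h"]) (use hL in auto)
  have hom: "\<forall>x\<in>L. \<forall>y\<in>L. ?h (mult x y) = mult (?h x) (?h y) \<or> ?h (mult x y) = mult (?h y) (?h x)"
  proof (intro ballI)
    fix x y assume "x \<in> L" "y \<in> L"
    then obtain b \<sigma> c \<mu> where s: "\<sigma> \<subseteq> {1..n}" "x = sg b (A \<sigma>)" and u: "\<mu> \<subseteq> {1..n}" "y = sg c (A \<mu>)"
      using basis_surj by metis
    obtain d where d: "mult (A \<sigma>) (A \<mu>) = sg d (A (symdiff \<sigma> \<mu>))" using A_mult_sg[OF s(1) u(1)] by blast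
    define D where "D = symdiff \<sigma> \<mu>"
    have D: "D \<subseteq> {1..n}" using symdiff_sub[OF s(1) u(1)] D_def by simp
    have As: "A \<sigma> \<in> L" "A \<mu> \<in> L" "A D \<in> L" using A_in s u D by auto
    have xy: "mult x y = sg b (sg c (sg d (A D)))"
      using s(2) u(2) d As unfolding D_def by (simp add: sg_multl sg_multr) (cases b; cases c; cases d; simp)
    let ?B = "b = (\<Psi> \<sigma> = 1)" and ?C = "c = (\<Psi> \<mu> = 1)"
    have hxy: "?h (mult x y) = sg ((b = (c = d)) = (\<Psi> D = 1)) (A D)"
      using xy hat_eval[OF D] As by simp
    have hx: "?h x = sg ?B (A \<sigma>)" using s hat_eval by simp
    have hy: "?h y = sg ?C (A \<mu>)" using u hat_eval by simp
    have hxhy: "mult (?h x) (?h y) = sg (?B = (?C = d)) (A D)"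
      unfolding hx hy using As d unfolding D_def by (simp add: sg_multl sg_multr bl0[of "c = (\<Psi> \<mu> = 1)" "b = (\<Psi> \<sigma> = 1)" d])
    show "?h (mult x y) = mult (?h x) (?h y) \<or> ?h (mult x y) = mult (?h y) (?h x)"
    proof (cases "mult (A \<sigma>) (A \<mu>) = mult (A \<mu>) (A \<sigma>)")
      case True
      have "\<Psi> D = \<Psi> \<sigma> * \<Psi> \<mu>" using Pm[OF s(1) u(1) True] D_def by simp
      hence pD: "(\<Psi> D = 1) = ((\<Psi> \<sigma> = 1) = (\<Psi> \<mu> = 1))" using Pv[OF s(1)] Pv[OF u(1)] by auto
      have "?h (mult x y) = mult (?h x) (?h y)" unfolding hxy hxhy using bl1[OF pD, of b c d] by simp
      thus ?thesis by blast
    next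
      case False
      have yx: "mult (A \<mu>) (A \<sigma>) = sg False (sg d (A D))"
        using noncomm[OF As(1,2) False] d unfolding D_def by simp
      have hyhx: "mult (?h y) (?h x) = sg (?B = (?C = (\<not> d))) (A D)"
        unfolding hx hy using As yx by (simp add: sg_multl sg_multr)
      show ?thesis unfolding hxy hxhy hyhx by (rule sg_disj[OF bl2[of b c d "\<Psi> D = 1" "\<Psi> \<sigma> = 1" "\<Psi> \<mu> = 1"]])
    qed
  qed
  have fixa: "\<forall>i\<in>{1..n}. ?h (a i) = a i"
  proof
    fix i assume i: "i \<in> {1..n}"
    have "?h (sg True (A {i})) = sg True (A {i})" using hat_eval[of "{i}" \<Psi> True] i P1[OF i] by simp
    thus "?h (a i) = a i" using i by simp
  qed
  show ?thesis unfolding H_B_def half_automorphism_def using bij hom fixa by blast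
qed


lemma sg_comm: "sg b (sg c x) = sg c (sg b x)" unfolding sg_def by simp
lemma bl4: "(p = q) = (q = (p::bool))" by blast
lemma bl3: "((d = r) = ((p = q) = d)) \<Longrightarrow> r = (p = (q::bool))"
  by (cases d; cases r; cases p; cases q) simp_all

lemma dir2: assumes F: "\<phi> \<in> H_B L mult a n"
  shows "\<exists>\<Psi>\<in>R_B L mult e a n. \<forall>x\<in>L. \<phi> x = hat \<Psi> x"
proof -
  have bij: "bij_betw \<phi> L L" and hom: "\<And>x y. x \<in> L \<Longrightarrow> y \<in> L \<Longrightarrow>
      \<phi> (mult x y) = mult (\<phi> x) (\<phi> y) \<or> \<phi> (mult x y) = mult (\<phi> y) (\<phi> x)"
    and fa: "\<And>i. i \<in> {1..n} \<Longrightarrow> \<phi> (a i) = a i"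
    using F unfolding H_B_def half_automorphism_def by auto
  have inL: "\<And>x. x \<in> L \<Longrightarrow> \<phi> x \<in> L" using bij unfolding bij_betw_def by auto
  have inj: "inj_on \<phi> L" using bij unfolding bij_betw_def by auto
  have fe: "\<phi> e = e"
  proof -
    have "\<phi> (mult e e) = mult (\<phi> e) (\<phi> e)" using hom[OF e_in e_in] by auto
    hence "mult e (\<phi> e) = mult (\<phi> e) (\<phi> e)" using e_in inL by simp
    thus ?thesis using rcancel[of "\<phi> e" e "\<phi> e"] e_in inL by simp
  qed
  have fm: "\<phi> m = m"
  proof -
    obtain x where x: "x \<in> L" "mult x x = m" using m_props by blast
    have "\<phi> m = mult (\<phi> x) (\<phi> x)" using hom[OF x(1) x(1)] x by auto
    hence "\<phi> m = e \<or> \<phi> m = m" using sq inL x by auto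
    moreover have "\<phi> m \<noteq> e" using inj fe m_ne e_in m_in unfolding inj_on_def by metis
    ultimately show ?thesis by blast
  qed
  have fsg: "\<And>b x. x \<in> L \<Longrightarrow> \<phi> (sg b x) = sg b (\<phi> x)"
  proof -
    fix b x assume x: "x \<in> L"
    show "\<phi> (sg b x) = sg b (\<phi> x)"
    proof (cases b)
      case True thus ?thesis by simp
    next
      case False
      have "\<phi> (mult m x) = mult m (\<phi> x)" using hom[OF m_in x] fm mcomm[OF inL[OF x]] by auto
      thus ?thesis using False unfolding sg_def by simp
    qed
  qed
  have feqv: "\<And>u v. u \<approx> v \<Longrightarrow> \<phi> u \<approx> \<phi> v"
  proof -
    fix u v assume "u \<approx> v"
    then obtain b where h: "u \<in> L" "v \<in> L" "u = sg b v" unfolding eqv_def by blast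
    hence "\<phi> u = sg b (\<phi> v)" using fsg by simp
    thus "\<phi> u \<approx> \<phi> v" unfolding eqv_def using h inL by blast
  qed
  have fmul: "\<And>x y. x \<in> L \<Longrightarrow> y \<in> L \<Longrightarrow> \<phi> (mult x y) \<approx> mult (\<phi> x) (\<phi> y)"
  proof -
    fix x y assume h: "x \<in> L" "y \<in> L"
    show "\<phi> (mult x y) \<approx> mult (\<phi> x) (\<phi> y)"
    proof (cases "\<phi> (mult x y) = mult (\<phi> x) (\<phi> y)")
      case True thus ?thesis using eqv_refl h inL by simp
    next
      case False
      hence "\<phi> (mult x y) = mult (\<phi> y) (\<phi> x)" using hom[OF h] by blast
      thus ?thesis using eqv_comm[OF inL[OF h(2)] inL[OF h(1)]] by simp
    qed
  qed
  have fA: "\<And>\<sigma>. \<sigma> \<subseteq> {1..n} \<Longrightarrow> \<phi> (A \<sigma>) \<approx> A \<sigma>"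
  proof -
    fix \<sigma> :: "nat set" assume s0: "\<sigma> \<subseteq> {1..n}"
    have "finite \<sigma>" using s0 finite_subset by blast
    thus "\<phi> (A \<sigma>) \<approx> A \<sigma>" using s0
    proof (induction \<sigma> rule: finite_induct)
      case empty thus ?case using fe eqv_refl e_in by simp
    next
      case (insert i \<sigma>)
      have i: "i \<in> {1..n}" and s: "\<sigma> \<subseteq> {1..n}" using insert by auto
      have ai: "a i \<in> L" using a_in i by blast
      have As: "A \<sigma> \<in> L" using A_in s by blast
      have "\<phi> (A (insert i \<sigma>)) \<approx> \<phi> (mult (a i) (A \<sigma>))" using feqv[OF A_insert[OF s i insert(2)]] .
      also have "\<dots> \<approx> mult (\<phi> (a i)) (\<phi> (A \<sigma>))" using fmul[OF ai As] .
      also have "\<phi> (a i) = a i" using fa[OF i] .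
      also have "mult (a i) (\<phi> (A \<sigma>)) \<approx> mult (a i) (A \<sigma>)" using eqv_congr[OF insert(3)[OF s] ai] .
      also have "\<dots> \<approx> A (insert i \<sigma>)" using eqv_sym[OF A_insert[OF s i insert(2)]] .
      finally show ?case .
    qed
  qed
  define \<Psi> where "\<Psi> = (\<lambda>\<sigma>. if \<phi> (A \<sigma>) = A \<sigma> then (1::int) else -1)"
  have fA2: "\<And>\<sigma>. \<sigma> \<subseteq> {1..n} \<Longrightarrow> \<phi> (A \<sigma>) = sg (\<Psi> \<sigma> = 1) (A \<sigma>)"
  proof -
    fix \<sigma> :: "nat set" assume s: "\<sigma> \<subseteq> {1..n}"
    obtain b where b: "\<phi> (A \<sigma>) = sg b (A \<sigma>)" using fA[OF s] unfolding eqv_def by blast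
    have As: "A \<sigma> \<in> L" using A_in s by blast
    show "\<phi> (A \<sigma>) = sg (\<Psi> \<sigma> = 1) (A \<sigma>)"
    proof (cases b)
      case True thus ?thesis using b unfolding \<Psi>_def by simp
    next
      case False
      hence "\<phi> (A \<sigma>) \<noteq> A \<sigma>" using b mx_ne[OF As] unfolding sg_def by simp
      thus ?thesis using b False unfolding \<Psi>_def by simp
    qed
  qed
  have eq: "\<forall>x\<in>L. \<phi> x = hat \<Psi> x"
  proof
    fix x assume "x \<in> L"
    then obtain b \<sigma> where s: "\<sigma> \<subseteq> {1..n}" "x = sg b (A \<sigma>)" using basis_surj by blast
    have As: "A \<sigma> \<in> L" using A_in s by blast
    have "\<phi> x = sg b (sg (\<Psi> \<sigma> = 1) (A \<sigma>))" using s fsg[OF As] fA2[OF s(1)] by simp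
    also have "\<dots> = sg (b = (\<Psi> \<sigma> = 1)) (A \<sigma>)" using As by simp
    also have "\<dots> = hat \<Psi> x" using hat_eval[OF s(1)] s(2) by simp
    finally show "\<phi> x = hat \<Psi> x" .
  qed
  have R: "\<Psi> \<in> R_B L mult e a n"
    unfolding R_B_def
  proof (intro CollectI conjI ballI impI)
    fix \<sigma> show "\<Psi> \<sigma> \<in> {1, -1}" unfolding \<Psi>_def by simp
  next
    show "\<Psi> {} = 1" unfolding \<Psi>_def using fe by simp
  next
    fix j assume "j \<in> {1..n}" thus "\<Psi> {j} = 1" unfolding \<Psi>_def using fa by simp
  next
    fix \<sigma> \<mu> assume s: "\<sigma> \<in> Pow {1..n}" and u: "\<mu> \<in> Pow {1..n}"
      and c: "mult (A \<sigma>) (A \<mu>) = mult (A \<mu>) (A \<sigma>)"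
    have s': "\<sigma> \<subseteq> {1..n}" and u': "\<mu> \<subseteq> {1..n}" using s u by auto
    define D where "D = symdiff \<sigma> \<mu>"
    have D: "D \<subseteq> {1..n}" using symdiff_sub[OF s' u'] D_def by simp
    have As: "A \<sigma> \<in> L" "A \<mu> \<in> L" "A D \<in> L" using A_in s' u' D by auto
    obtain d where d: "mult (A \<sigma>) (A \<mu>) = sg d (A D)" using A_mult_sg[OF s' u'] D_def by blast
    let ?P = "\<Psi> \<sigma> = 1" and ?Q = "\<Psi> \<mu> = 1"
    have p1: "mult (\<phi> (A \<sigma>)) (\<phi> (A \<mu>)) = sg ?P (sg ?Q (mult (A \<sigma>) (A \<mu>)))"
    proof -
      have "mult (sg ?P (A \<sigma>)) (sg ?Q (A \<mu>)) = sg ?P (mult (A \<sigma>) (sg ?Q (A \<mu>)))"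
        using sg_multl[OF As(1) sg_in[OF As(2)]] .
      also have "\<dots> = sg ?P (sg ?Q (mult (A \<sigma>) (A \<mu>)))" using sg_multr[OF As(1,2), of ?Q] by (rule arg_cong)
      finally show ?thesis unfolding fA2[OF s'] fA2[OF u'] .
    qed
    have p2: "mult (\<phi> (A \<mu>)) (\<phi> (A \<sigma>)) = sg ?Q (sg ?P (mult (A \<sigma>) (A \<mu>)))"
    proof -
      have "mult (sg ?Q (A \<mu>)) (sg ?P (A \<sigma>)) = sg ?Q (mult (A \<mu>) (sg ?P (A \<sigma>)))"
        using sg_multl[OF As(2) sg_in[OF As(1)]] .
      also have "\<dots> = sg ?Q (sg ?P (mult (A \<mu>) (A \<sigma>)))" using sg_multr[OF As(2,1), of ?P] by (rule arg_cong)
      finally show ?thesis unfolding fA2[OF s'] fA2[OF u'] c .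
    qed
    have p12: "sg (\<Psi> \<mu> = 1) (sg (\<Psi> \<sigma> = 1) (mult (A \<sigma>) (A \<mu>))) = sg (\<Psi> \<sigma> = 1) (sg (\<Psi> \<mu> = 1) (mult (A \<sigma>) (A \<mu>)))"
      unfolding sg_def by simp
    have "\<phi> (mult (A \<sigma>) (A \<mu>)) = sg (\<Psi> \<sigma> = 1) (sg (\<Psi> \<mu> = 1) (mult (A \<sigma>) (A \<mu>)))"
      using hom[OF As(1,2)] p1 p2 p12 by auto
    also have "\<dots> = sg ((\<Psi> \<sigma> = 1) = ((\<Psi> \<mu> = 1) = d)) (A D)" using d As by simp
    finally have l: "\<phi> (mult (A \<sigma>) (A \<mu>)) = sg ((\<Psi> \<sigma> = 1) = ((\<Psi> \<mu> = 1) = d)) (A D)" .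
    have "\<phi> (mult (A \<sigma>) (A \<mu>)) = sg (d = (\<Psi> D = 1)) (A D)"
      unfolding d using fsg[OF As(3)] fA2[OF D] As by simp
    hence "sg (d = (\<Psi> D = 1)) (A D) = sg ((\<Psi> \<sigma> = 1) = ((\<Psi> \<mu> = 1) = d)) (A D)" using l by simp
    hence "(d = (\<Psi> D = 1)) = ((\<Psi> \<sigma> = 1) = ((\<Psi> \<mu> = 1) = d))" using sg_inj_b[OF As(3)] by blast
    hence "(d = (\<Psi> D = 1)) = (((\<Psi> \<sigma> = 1) = (\<Psi> \<mu> = 1)) = d)" by (cases d) simp_all
    hence "(\<Psi> D = 1) = ((\<Psi> \<sigma> = 1) = (\<Psi> \<mu> = 1))" by (rule bl3)
    thus "\<Psi> (symdiff \<sigma> \<mu>) = \<Psi> \<sigma> * \<Psi> \<mu>" unfolding D_def[symmetric] unfolding \<Psi>_def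
      by (auto split: if_splits)
  qed
  show ?thesis using R eq by blast
qed

end

theorem proposition3p1:
  fixes L :: "'a set" and mult :: "'a \<Rightarrow> 'a \<Rightarrow> 'a" and e :: 'a
    and a :: "nat \<Rightarrow> 'a" and n :: nat
  assumes "code_loop L mult e"
    and "code_basis L mult e a n"
  shows "(\<forall>\<Psi>\<in>R_B L mult e a n. Psi_hat L mult e a n \<Psi> \<in> H_B L mult a n) \<and>
         (\<forall>\<phi>\<in>H_B L mult a n. \<exists>\<Psi>\<in>R_B L mult e a n. \<forall>x\<in>L. \<phi> x = Psi_hat L mult e a n \<Psi> x)"
proof -
  interpret cl L mult e a n using assms by (unfold_locales)
  show ?thesis using dir1 dir2 by blast
qed

end
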